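(* Let $\mathbf{x}$ be a feasible solution of $\textsc{Dir-MC-Rel}$ and let $\theta$ be uniform on $(0,1)$. Then $\mathbb{E}\big[\sum_{e\in C(\theta)}w_e\big]\le 2\sum_{e\in E}w_e x_e$.
   Context: $G=(V,E)$ is a directed graph with non-negative edge weights $w_e$ and distinct terminals $s_1,\dots,s_k$, $k\ge2$. For $i\neq j$, $\mathcal{P}_{ij}$ is the set of directed paths from $s_i$ to $s_j$ in $G$. $\textsc{Dir-MC-Rel}$: minimize $\sum_e w_e x_e$ s.t. $\sum_{e\in p}x_e\ge1$ for all $p\in\mathcal{P}_{ij}$, $i\ne j$, and $x\ge0$. Given feasible $\mathbf{x}$, form $G^+$ by adding new vertices $t_1,\dots,t_k$ and new edges $(t_i,s_j)$ for all $i\neq j$, each with $x$-value $0$. For vertices $u,v$ of $G^+$, $d(u,v)$ is the length of a shortest directed path from $u$ to $v$ in $G^+$ with edge lengths $\mathbf{x}$ ($+\infty$ if none). $B(v,r)=\{u: d(v,u)\le r\}$. For a vertex set $A$, $\delta^+(A)$ is the set of edges of $G^+$ with tail in $A$ and head not in $A$. For $\theta\in(0,1)$, $C(\theta)=\bigcup_{i=1}^k\delta^+(B(t_i,\theta))$. *)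

theory Defs
  imports "HOL-Analysis.Analysis"
begin

definition dpath :: "'v set \<Rightarrow> ('v \<times> 'v) set \<Rightarrow> 'v list \<Rightarrow> 'v \<Rightarrow> 'v \<Rightarrow> bool" where
  "dpath VV EE p u v \<longleftrightarrow> p \<noteq> [] \<and> hd p = u \<and> last p = v \<and> distinct p \<and> set p \<subseteq> VV
     \<and> (\<forall>n. Suc n < length p \<longrightarrow> (p ! n, p ! Suc n) \<in> EE)"

definition path_edges :: "'v list \<Rightarrow> ('v \<times> 'v) list" where
  "path_edges p = zip p (tl p)"

definition path_len :: "('v \<times> 'v \<Rightarrow> real) \<Rightarrow> 'v list \<Rightarrow> real" where
  "path_len l p = sum_list (map l (path_edges p))"

(* shortest-path distance, +infinity if no path *)
definition sdist :: "'v set \<Rightarrow> ('v \<times> 'v) set \<Rightarrow> ('v \<times> 'v \<Rightarrow> real) \<Rightarrow> 'v \<Rightarrow> 'v \<Rightarrow> ereal" where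
  "sdist VV EE l u v = (INF p \<in> {p. dpath VV EE p u v}. ereal (path_len l p))"

definition dball :: "'v set \<Rightarrow> ('v \<times> 'v) set \<Rightarrow> ('v \<times> 'v \<Rightarrow> real) \<Rightarrow> 'v \<Rightarrow> real \<Rightarrow> 'v set" where
  "dball VV EE l v r = {u \<in> VV. sdist VV EE l v u \<le> ereal r}"

definition out_cut :: "('v \<times> 'v) set \<Rightarrow> 'v set \<Rightarrow> ('v \<times> 'v) set" where
  "out_cut EE A = {e \<in> EE. fst e \<in> A \<and> snd e \<notin> A}"

definition dir_mc_feasible :: "'v set \<Rightarrow> ('v \<times> 'v) set \<Rightarrow> (nat \<Rightarrow> 'v) \<Rightarrow> nat \<Rightarrow> ('v \<times> 'v \<Rightarrow> real) \<Rightarrow> bool" where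
  "dir_mc_feasible V E s k x \<longleftrightarrow>
     (\<forall>e\<in>E. 0 \<le> x e) \<and>
     (\<forall>i\<in>{1..k}. \<forall>j\<in>{1..k}. i \<noteq> j \<longrightarrow>
        (\<forall>p. dpath V E p (s i) (s j) \<longrightarrow> 1 \<le> path_len x p))"

(* The graph G^+: original vertices Inl v, new vertices t_i = Inr i *)
definition plusV :: "'v set \<Rightarrow> nat \<Rightarrow> ('v + nat) set" where
  "plusV V k = Inl ` V \<union> Inr ` {1..k}"

definition plusE :: "('v \<times> 'v) set \<Rightarrow> (nat \<Rightarrow> 'v) \<Rightarrow> nat \<Rightarrow> (('v + nat) \<times> ('v + nat)) set" where
  "plusE E s k = (\<lambda>(a, b). (Inl a, Inl b)) ` E
     \<union> {(Inr i, Inl (s j)) | i j. i \<in> {1..k} \<and> j \<in> {1..k} \<and> i \<noteq> j}"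

definition plusx :: "('v \<times> 'v \<Rightarrow> real) \<Rightarrow> ('v + nat) \<times> ('v + nat) \<Rightarrow> real" where
  "plusx x e = (case e of (Inl a, Inl b) \<Rightarrow> x (a, b) | _ \<Rightarrow> 0)"

definition cutC :: "'v set \<Rightarrow> ('v \<times> 'v) set \<Rightarrow> (nat \<Rightarrow> 'v) \<Rightarrow> nat \<Rightarrow> ('v \<times> 'v \<Rightarrow> real) \<Rightarrow> real
    \<Rightarrow> (('v + nat) \<times> ('v + nat)) set" where
  "cutC V E s k x \<theta> = (\<Union>i\<in>{1..k}.
     out_cut (plusE E s k) (dball (plusV V k) (plusE E s k) (plusx x) (Inr i) \<theta>))"

end

theory Submission
  imports Defs
begin

lemma pe_Nil[simp]: "path_edges [] = []" by (simp add: path_edges_def)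
lemma pe_single[simp]: "path_edges [a] = []" by (simp add: path_edges_def)
lemma pe_cons2[simp]: "path_edges (a # b # r) = (a, b) # path_edges (b # r)" by (simp add: path_edges_def)

lemma pe_snoc: "p \<noteq> [] \<Longrightarrow> path_edges (p @ [c]) = path_edges p @ [(last p, c)]"
proof (induction p)
  case Nil then show ?case by simp
next
  case (Cons a p) then show ?case by (cases p) auto
qed

lemma pe_append: "q \<noteq> [] \<Longrightarrow> \<exists>t. path_edges (q @ r) = path_edges q @ t"
proof (induction q)
  case Nil then show ?case by simp
next
  case (Cons a q) then show ?case
    by (cases q; cases r) auto
qed

lemma dpath_edges: "dpath VV EE p a b \<Longrightarrow> set (path_edges p) \<subseteq> EE"
proof
  fix e assume d: "dpath VV EE p a b" and e: "e \<in> set (path_edges p)"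
  then obtain n where n: "n < length (zip p (tl p))" "e = zip p (tl p) ! n"
    unfolding path_edges_def by (metis in_set_conv_nth)
  then have "e = (p ! n, p ! Suc n)" "Suc n < length p" by (auto simp: nth_tl)
  then show "e \<in> EE" using d unfolding dpath_def by auto
qed

lemma path_len_nonneg: "\<forall>e\<in>EE. 0 \<le> l e \<Longrightarrow> dpath VV EE p a b \<Longrightarrow> 0 \<le> path_len l p"
  unfolding path_len_def using dpath_edges[of VV EE p a b]
  by (intro sum_list_nonneg) auto

lemma extend_path:
  assumes d: "dpath VV EE p a b" and bc: "(b, c) \<in> EE" and c: "c \<in> VV"
    and nn: "\<forall>e\<in>EE. 0 \<le> l e"
  shows "\<exists>q. dpath VV EE q a c \<and> path_len l q \<le> path_len l p + l (b, c)"
proof (cases "c \<in> set p")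
  case False
  have ne: "p \<noteq> []" and lp: "last p = b" using d by (auto simp: dpath_def)
  have "dpath VV EE (p @ [c]) a c"
    unfolding dpath_def
  proof (intro conjI allI impI)
    fix n assume n: "Suc n < length (p @ [c])"
    show "((p @ [c]) ! n, (p @ [c]) ! Suc n) \<in> EE"
    proof (cases "Suc n < length p")
      case True then show ?thesis using d n by (auto simp: dpath_def nth_append)
    next
      case False
      then have "Suc n = length p" using n by simp
      then have "p ! n = b" using lp ne by (metis diff_Suc_1 last_conv_nth)
      then show ?thesis using bc \<open>Suc n = length p\<close> by (auto simp: nth_append)
    qed
  qed (use d False c in \<open>auto simp: dpath_def\<close>)
  moreover have "path_len l (p @ [c]) = path_len l p + l (b, c)"
    using pe_snoc[OF ne, of c] lp by (simp add: path_len_def)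
  ultimately show ?thesis by auto
next
  case True
  then obtain n where n: "n < length p" "p ! n = c" by (metis in_set_conv_nth)
  define q where "q = take (Suc n) p"
  have dq: "dpath VV EE q a c"
    unfolding dpath_def
  proof (intro conjI allI impI)
    show "q \<noteq> []" using n by (cases p) (auto simp: q_def)
    show "hd q = a" using d n by (auto simp: q_def dpath_def hd_take)
    show "last q = c" using n by (simp add: q_def take_Suc_conv_app_nth)
    show "distinct q" using d by (simp add: q_def dpath_def)
    show "set q \<subseteq> VV" using d set_take_subset[of "Suc n" p] unfolding q_def dpath_def by blast
    fix m assume "Suc m < length q"
    then show "(q ! m, q ! Suc m) \<in> EE" using d by (auto simp: q_def dpath_def)
  qed
  have pq: "p = q @ drop (Suc n) p" by (simp add: q_def)
  obtain t where t: "path_edges p = path_edges q @ t"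
  proof -
    have "q \<noteq> []" using dq by (simp add: dpath_def)
    then show ?thesis using pe_append[of q "drop (Suc n) p"] pq that by metis
  qed
  have "set t \<subseteq> EE" using dpath_edges[OF d] t by auto
  then have "0 \<le> sum_list (map l t)" using nn by (intro sum_list_nonneg) auto
  then have "path_len l q \<le> path_len l p" by (simp add: path_len_def t)
  moreover have "0 \<le> l (b, c)" using nn bc by auto
  ultimately show ?thesis using dq by force
qed

lemma sdist_le: "dpath VV EE p a b \<Longrightarrow> sdist VV EE l a b \<le> ereal (path_len l p)"
  unfolding sdist_def by (rule INF_lower2[of p]) auto

lemma sdist_tri:
  assumes nn: "\<forall>e\<in>EE. 0 \<le> l e" and bc: "(b, c) \<in> EE" and c: "c \<in> VV"
  shows "sdist VV EE l a c \<le> sdist VV EE l a b + ereal (l (b, c))"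
proof -
  have "sdist VV EE l a c - ereal (l (b, c)) \<le> sdist VV EE l a b"
    unfolding sdist_def[of VV EE l a b]
  proof (rule INF_greatest)
    fix p assume "p \<in> {p. dpath VV EE p a b}"
    then obtain q where q: "dpath VV EE q a c" "path_len l q \<le> path_len l p + l (b, c)"
      using extend_path[OF _ bc c nn] by blast
    have "sdist VV EE l a c \<le> ereal (path_len l p + l (b, c))"
      using sdist_le[OF q(1), of l] q(2) by (meson ereal_less_eq(3) order_trans)
    then show "sdist VV EE l a c - ereal (l (b, c)) \<le> ereal (path_len l p)"
      by (simp add: ereal_minus_le)
  qed
  then show ?thesis by (simp add: ereal_minus_le)
qed

lemma plusx_nonneg: "\<forall>e\<in>E. 0 \<le> x e \<Longrightarrow> \<forall>e\<in>plusE E s k. 0 \<le> plusx x e"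
  by (auto simp: plusE_def plusx_def)

lemma tl_Inl:
  assumes d: "dpath (plusV V k) (plusE E s k) p a b" and z: "z \<in> set (tl p)"
  shows "\<exists>v. z = Inl v"
proof -
  obtain m where m: "m < length (tl p)" "z = tl p ! m" using z by (metis in_set_conv_nth)
  then have "Suc m < length p" "z = p ! Suc m" by (auto simp: nth_tl)
  then have "(p ! m, z) \<in> plusE E s k" using d by (auto simp: dpath_def)
  then show ?thesis by (auto simp: plusE_def)
qed

lemma swap_start:
  assumes i: "i \<in> {1..k}" and i': "i' \<in> {1..k}" and ii: "i \<noteq> i'" and i'': "i'' \<in> {1..k}"
  shows "min (sdist (plusV V k) (plusE E s k) (plusx x) (Inr i) (Inl u))
             (sdist (plusV V k) (plusE E s k) (plusx x) (Inr i') (Inl u))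
         \<le> sdist (plusV V k) (plusE E s k) (plusx x) (Inr i'') (Inl u)"
  unfolding sdist_def[of _ _ _ "Inr i''"]
proof (rule INF_greatest)
  let ?VV = "plusV V k" and ?EE = "plusE E s k"
  fix p assume "p \<in> {p. dpath ?VV ?EE p (Inr i'') (Inl u)}"
  then have d: "dpath ?VV ?EE p (Inr i'') (Inl u)" by simp
  then obtain r where p1: "p = Inr i'' # r" unfolding dpath_def by (cases p) auto
  have "r \<noteq> []" using d p1 by (auto simp: dpath_def)
  then obtain b r' where r: "r = b # r'" by (cases r) auto
  have "(Inr i'', b) \<in> ?EE" using d p1 r unfolding dpath_def by force
  then obtain j where j: "b = Inl (s j)" "j \<in> {1..k}" "j \<noteq> i''" by (auto simp: plusE_def)
  define t where "t = (if j = i then i' else i)"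
  have t: "t \<in> {1..k}" "t \<noteq> j" "t = i \<or> t = i'" using i i' ii by (auto simp: t_def)
  define q where "q = Inr t # b # r'"
  have notin: "Inr t \<notin> set (b # r')"
    using tl_Inl[OF d] p1 r by fastforce
  have dq: "dpath ?VV ?EE q (Inr t) (Inl u)"
    unfolding dpath_def
  proof (intro conjI allI impI)
    show "q \<noteq> []" "hd q = Inr t" by (simp_all add: q_def)
    show "last q = Inl u" using d p1 r by (simp add: q_def dpath_def)
    show "distinct q" using d p1 r notin by (simp add: q_def dpath_def)
    show "set q \<subseteq> ?VV" using d p1 r t by (auto simp: q_def dpath_def plusV_def)
    fix n assume n: "Suc n < length q"
    show "(q ! n, q ! Suc n) \<in> ?EE"
    proof (cases n)
      case 0 then show ?thesis using j t by (auto simp: q_def plusE_def)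
    next
      case (Suc m)
      then have "(p ! n, p ! Suc n) \<in> ?EE" using d n p1 r by (auto simp: dpath_def q_def)
      then show ?thesis using Suc p1 r by (simp add: q_def)
    qed
  qed
  have "path_len (plusx x) q = path_len (plusx x) p"
    using p1 r by (simp add: q_def path_len_def plusx_def)
  then have "sdist ?VV ?EE (plusx x) (Inr t) (Inl u) \<le> ereal (path_len (plusx x) p)"
    using sdist_le[OF dq, of "plusx x"] by simp
  then show "min (sdist ?VV ?EE (plusx x) (Inr i) (Inl u)) (sdist ?VV ?EE (plusx x) (Inr i') (Inl u))
      \<le> ereal (path_len (plusx x) p)"
    using t(3) by (metis min.coboundedI1 min.coboundedI2)
qed

lemma two_vals:
  assumes k: "1 \<le> k"
  shows "\<exists>a1 a2. \<forall>i\<in>{1..k}. sdist (plusV V k) (plusE E s k) (plusx x) (Inr i) (Inl u) = a1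
            \<or> sdist (plusV V k) (plusE E s k) (plusx x) (Inr i) (Inl u) = a2"
proof -
  define D where "D i = sdist (plusV V k) (plusE E s k) (plusx x) (Inr i) (Inl u)" for i
  define m where "m = Min (D ` {1..k})"
  have fin: "finite (D ` {1..k})" "D ` {1..k} \<noteq> {}" using k by auto
  obtain i0 where i0: "i0 \<in> {1..k}" "D i0 = m" using Min_in[OF fin] unfolding m_def by auto
  have ge: "m \<le> D i" if "i \<in> {1..k}" for i using fin that unfolding m_def by auto
  show ?thesis
  proof (cases "\<exists>i1\<in>{1..k}. D i1 \<noteq> m")
    case False then show ?thesis unfolding D_def by blast
  next
    case True
    then obtain i1 where i1: "i1 \<in> {1..k}" "D i1 \<noteq> m" by blast
    have "D i = m \<or> D i = D i1" if i: "i \<in> {1..k}" for i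
    proof (rule ccontr)
      assume c: "\<not> (D i = m \<or> D i = D i1)"
      then have "i \<noteq> i1" by auto
      have "min (D i) (D i1) \<le> D i0" unfolding D_def
        by (rule swap_start[OF i i1(1) \<open>i \<noteq> i1\<close> i0(1)])
      moreover have "m < D i" "m < D i1" using ge[OF i] ge[OF i1(1)] c i1 by auto
      ultimately show False using i0 by (simp add: min_def split: if_splits)
    qed
    then show ?thesis unfolding D_def by blast
  qed
qed

lemma ereal_interval:
  fixes a :: ereal
  assumes "a \<le> ereal t" "ereal t < a + ereal c"
  shows "t \<in> {real_of_ereal a ..< real_of_ereal a + c}"
  using assms by (cases a) auto

lemma cut_interval:
  assumes nnx: "\<forall>e\<in>E. 0 \<le> x e" and e: "(u, v) \<in> E" and EV: "E \<subseteq> V \<times> V"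
    and c: "(Inl u, Inl v) \<in> cutC V E s k x \<theta>"
  shows "\<exists>i\<in>{1..k}. \<theta> \<in> {real_of_ereal (sdist (plusV V k) (plusE E s k) (plusx x) (Inr i) (Inl u)) ..<
              real_of_ereal (sdist (plusV V k) (plusE E s k) (plusx x) (Inr i) (Inl u)) + x (u, v)}"
proof -
  let ?d = "sdist (plusV V k) (plusE E s k) (plusx x)"
  from c obtain i where i: "i \<in> {1..k}" "?d (Inr i) (Inl u) \<le> ereal \<theta>"
      "\<not> ?d (Inr i) (Inl v) \<le> ereal \<theta>"
    using e EV by (auto simp: cutC_def out_cut_def dball_def plusV_def)
  have ed: "(Inl u, Inl v) \<in> plusE E s k" using e by (force simp: plusE_def)
  have vV: "Inl v \<in> plusV V k" using e EV by (auto simp: plusV_def)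
  have "?d (Inr i) (Inl v) \<le> ?d (Inr i) (Inl u) + ereal (plusx x (Inl u, Inl v))"
    by (rule sdist_tri[OF plusx_nonneg[OF nnx] ed vV])
  then have "ereal \<theta> < ?d (Inr i) (Inl u) + ereal (x (u, v))"
    using i(3) by (simp add: plusx_def)
  then show ?thesis using i by (blast intro: ereal_interval)
qed

theorem mainTheorem4:
  fixes V :: "'v set" and E :: "('v \<times> 'v) set" and w x :: "'v \<times> 'v \<Rightarrow> real"
    and s :: "nat \<Rightarrow> 'v" and k :: nat
  assumes "finite V" and "E \<subseteq> V \<times> V"
    and "\<forall>e\<in>E. 0 \<le> w e"
    and "2 \<le> k" and "inj_on s {1..k}" and "s ` {1..k} \<subseteq> V"
    and "dir_mc_feasible V E s k x"
  shows "(\<integral>\<^sup>+ \<theta>. ennreal (\<Sum>e\<in>{e\<in>E. (Inl (fst e), Inl (snd e)) \<in> cutC V E s k x \<theta>}. w e)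
            \<partial>(uniform_measure lborel {0<..<1::real}))
         \<le> ennreal (2 * (\<Sum>e\<in>E. w e * x e))"
proof -
  let ?d = "sdist (plusV V k) (plusE E s k) (plusx x)"
  let ?U = "uniform_measure lborel {0<..<1::real}"
  have finE: "finite E" using assms(1,2) finite_subset by (metis finite_SigmaI)
  have nnx: "\<forall>e\<in>E. 0 \<le> x e" using assms(7) by (simp add: dir_mc_feasible_def)
  have nnw: "\<forall>e\<in>E. 0 \<le> w e" using assms(3) .
  have "\<forall>e\<in>E. \<exists>a. \<forall>i\<in>{1..k}. ?d (Inr i) (Inl (fst e)) = fst a \<or> ?d (Inr i) (Inl (fst e)) = snd a"
    using two_vals[of k] assms(4) by fastforce
  then obtain A where A: "\<And>e i. e \<in> E \<Longrightarrow> i \<in> {1..k} \<Longrightarrow>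
      ?d (Inr i) (Inl (fst e)) = fst (A e) \<or> ?d (Inr i) (Inl (fst e)) = snd (A e)"
    by metis
  define I1 where "I1 e = {real_of_ereal (fst (A e)) ..< real_of_ereal (fst (A e)) + x e}" for e
  define I2 where "I2 e = {real_of_ereal (snd (A e)) ..< real_of_ereal (snd (A e)) + x e}" for e
  define g where "g \<theta> = (\<Sum>e\<in>E. ennreal (w e) * (indicator (I1 e) \<theta> + indicator (I2 e) \<theta>))" for \<theta> :: real
  have cover: "\<theta> \<in> I1 e \<union> I2 e" if e: "e \<in> E" "(Inl (fst e), Inl (snd e)) \<in> cutC V E s k x \<theta>" for e \<theta>
  proof -
    obtain u v where uv: "e = (u, v)" by (cases e)
    obtain i where "i \<in> {1..k}" "\<theta> \<in> {real_of_ereal (?d (Inr i) (Inl u)) ..< real_of_ereal (?d (Inr i) (Inl u)) + x (u, v)}"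
      using cut_interval[OF nnx _ assms(2), of u v s k \<theta>] e uv by auto
    then show ?thesis using A[OF e(1)] uv unfolding I1_def I2_def by fastforce
  qed
  have pw: "ennreal (\<Sum>e\<in>{e\<in>E. (Inl (fst e), Inl (snd e)) \<in> cutC V E s k x \<theta>}. w e) \<le> g \<theta>" for \<theta>
  proof -
    let ?C = "{e\<in>E. (Inl (fst e), Inl (snd e)) \<in> cutC V E s k x \<theta>}"
    have "ennreal (\<Sum>e\<in>?C. w e) = (\<Sum>e\<in>?C. ennreal (w e))"
      using nnw by (intro sum_ennreal[symmetric]) auto
    also have "\<dots> \<le> (\<Sum>e\<in>?C. ennreal (w e) * (indicator (I1 e) \<theta> + indicator (I2 e) \<theta>))"
    proof (rule sum_mono)
      fix e assume "e \<in> ?C"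
      then have "1 \<le> (indicator (I1 e) \<theta> + indicator (I2 e) \<theta> :: ennreal)"
        using cover[of e \<theta>] by (auto simp: indicator_def)
      then show "ennreal (w e) \<le> ennreal (w e) * (indicator (I1 e) \<theta> + indicator (I2 e) \<theta>)"
        by (metis mult.right_neutral mult_left_mono zero_le)
    qed
    also have "\<dots> \<le> g \<theta>" unfolding g_def using finE by (intro sum_mono2) auto
    finally show ?thesis .
  qed
  have meas: "emeasure ?U (I1 e) \<le> ennreal (x e)" "emeasure ?U (I2 e) \<le> ennreal (x e)" if "e \<in> E" for e
  proof -
    have "emeasure ?U I \<le> emeasure lborel I" if "I \<in> sets lborel" for I
    proof -
      have "emeasure ?U I = emeasure lborel ({0<..<1} \<inter> I)" using that by (simp add: divide_ennreal_def)
      also have "\<dots> \<le> emeasure lborel I" by (rule emeasure_mono) (use that in auto)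
      finally show ?thesis .
    qed
    note mU = this
    have x0: "0 \<le> x e" using nnx \<open>e \<in> E\<close> by auto
    have "emeasure ?U (I1 e) \<le> emeasure lborel (I1 e)" by (rule mU) (simp add: I1_def)
    also have "emeasure lborel (I1 e) = ennreal (x e)" using x0 by (simp add: I1_def)
    finally show "emeasure ?U (I1 e) \<le> ennreal (x e)" .
    have "emeasure ?U (I2 e) \<le> emeasure lborel (I2 e)" by (rule mU) (simp add: I2_def)
    also have "emeasure lborel (I2 e) = ennreal (x e)" using x0 by (simp add: I2_def)
    finally show "emeasure ?U (I2 e) \<le> ennreal (x e)" .
  qed
  have "(\<integral>\<^sup>+ \<theta>. ennreal (\<Sum>e\<in>{e\<in>E. (Inl (fst e), Inl (snd e)) \<in> cutC V E s k x \<theta>}. w e) \<partial>?U)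
        \<le> (\<integral>\<^sup>+ \<theta>. g \<theta> \<partial>?U)"
    by (rule nn_integral_mono) (rule pw)
  also have "\<dots> = (\<Sum>e\<in>E. ennreal (w e) * (emeasure ?U (I1 e) + emeasure ?U (I2 e)))"
    unfolding g_def
    by (subst nn_integral_sum) (auto simp: nn_integral_cmult nn_integral_add I1_def I2_def)
  also have "\<dots> \<le> (\<Sum>e\<in>E. ennreal (w e) * (ennreal (x e) + ennreal (x e)))"
    using meas by (intro sum_mono mult_left_mono add_mono) auto
  also have "\<dots> = (\<Sum>e\<in>E. ennreal (2 * (w e * x e)))"
    using nnx nnw by (intro sum.cong refl) (auto simp: ennreal_plus[symmetric] ennreal_mult[symmetric] simp del: ennreal_plus)
  also have "\<dots> = ennreal (2 * (\<Sum>e\<in>E. w e * x e))"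
    using nnx nnw by (subst sum_ennreal) (auto simp: sum_distrib_left)
  finally show ?thesis .
qed

end
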